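(* Let $G_1,G_2$ be ordered cores. If there is an order-preserving homomorphism from $G_1$ to $G_2$ and an order-preserving homomorphism from $G_2$ to $G_1$, then there is an order-preserving isomorphism between $G_1$ and $G_2$.
   Context: All graphs are undirected with vertex sets that are subsets of $\mathbb{N}$ (so linearly ordered); subgraphs inherit the vertex labels. An order-preserving homomorphism from $G$ to $G'$ is a map $f:V(G)\to V(G')$ with $f(i)\le f(j)$ whenever $i\le j$ and $\{f(i),f(j)\}\in E(G')$ for every $\{i,j\}\in E(G)$. An order-preserving isomorphism is an order-preserving homomorphism that is a graph isomorphism. The ordered core of $G$ is a subgraph of $G$ with the smallest number of vertices among subgraphs to which $G$ has an order-preserving homomorphism; $G$ is an ordered core if it is the ordered core of itself (i.e. there is no order-preserving homomorphism from $G$ to a subgraph of $G$ with fewer vertices). *)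

theory Defs
  imports Main
begin

type_synonym ograph = "nat set \<times> nat set set"

definition verts :: "ograph \<Rightarrow> nat set" where "verts G = fst G"
definition edges :: "ograph \<Rightarrow> nat set set" where "edges G = snd G"

definition is_graph :: "ograph \<Rightarrow> bool" where
  "is_graph G \<longleftrightarrow> finite (verts G) \<and>
     (\<forall>e\<in>edges G. \<exists>i j. i \<in> verts G \<and> j \<in> verts G \<and> i \<noteq> j \<and> e = {i, j})"

definition subgraph :: "ograph \<Rightarrow> ograph \<Rightarrow> bool" where
  "subgraph H G \<longleftrightarrow> is_graph H \<and> verts H \<subseteq> verts G \<and> edges H \<subseteq> edges G"

definition op_hom :: "ograph \<Rightarrow> ograph \<Rightarrow> (nat \<Rightarrow> nat) \<Rightarrow> bool" where
  "op_hom G G' f \<longleftrightarrow> f ` verts G \<subseteq> verts G' \<and>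
     (\<forall>i\<in>verts G. \<forall>j\<in>verts G. i \<le> j \<longrightarrow> f i \<le> f j) \<and>
     (\<forall>i j. {i, j} \<in> edges G \<longrightarrow> {f i, f j} \<in> edges G')"

definition op_iso :: "ograph \<Rightarrow> ograph \<Rightarrow> (nat \<Rightarrow> nat) \<Rightarrow> bool" where
  "op_iso G G' f \<longleftrightarrow> op_hom G G' f \<and> bij_betw f (verts G) (verts G') \<and>
     (\<forall>i\<in>verts G. \<forall>j\<in>verts G. {f i, f j} \<in> edges G' \<longrightarrow> {i, j} \<in> edges G)"

definition ordered_core :: "ograph \<Rightarrow> bool" where
  "ordered_core G \<longleftrightarrow> is_graph G \<and>
     \<not> (\<exists>H f. subgraph H G \<and> card (verts H) < card (verts G) \<and> op_hom G H f)"

end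

theory Submission
  imports Defs
begin

lemma edges_fin:
  assumes "is_graph G" shows "finite (edges G)" "\<forall>e\<in>edges G. e \<subseteq> verts G"
proof -
  show *: "\<forall>e\<in>edges G. e \<subseteq> verts G" using assms unfolding is_graph_def by fastforce
  have "edges G \<subseteq> Pow (verts G)" using * by blast
  moreover have "finite (verts G)" using assms unfolding is_graph_def by blast
  ultimately show "finite (edges G)" by (meson finite_Pow_iff finite_subset)
qed

lemma one_dir:
  assumes c1: "ordered_core G1" and c2: "ordered_core G2"
    and f: "op_hom G1 G2 f" and g: "op_hom G2 G1 g"
  shows "inj_on f (verts G1)" "card (verts G1) \<le> card (verts G2)"
    "card (edges G1) \<le> card (edges G2)"
proof -
  have g1: "is_graph G1" and g2: "is_graph G2" using c1 c2 unfolding ordered_core_def by auto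
  have fin1: "finite (verts G1)" and fin2: "finite (verts G2)"
    using g1 g2 unfolding is_graph_def by auto
  define h where "h = g \<circ> f"
  define H where "H = (h ` verts G1, (\<lambda>e. h ` e) ` edges G1)"
  have fi: "f ` verts G1 \<subseteq> verts G2" and gi: "g ` verts G2 \<subseteq> verts G1"
    using f g unfolding op_hom_def by auto
  have hi: "h ` verts G1 \<subseteq> verts G1" using fi gi unfolding h_def by auto
  have hedge: "{h i, h j} \<in> edges G1" if "{i,j} \<in> edges G1" for i j
    using f g that unfolding op_hom_def h_def by auto
  have sub: "subgraph H G1"
    unfolding subgraph_def is_graph_def verts_def edges_def
  proof (intro conjI)
    show "finite (fst H)" using fin1 unfolding H_def by auto
    show "\<forall>e\<in>snd H. \<exists>i j. i \<in> fst H \<and> j \<in> fst H \<and> i \<noteq> j \<and> e = {i, j}"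
    proof
      fix e assume "e \<in> snd H"
      then obtain e0 where e0: "e0 \<in> edges G1" "e = h ` e0" unfolding H_def by auto
      then obtain i j where ij: "i \<in> verts G1" "j \<in> verts G1" "e0 = {i,j}"
        using g1 unfolding is_graph_def by blast
      have "{h i, h j} \<in> edges G1" using hedge e0 ij by auto
      then have "h i \<noteq> h j" using g1 unfolding is_graph_def by fastforce
      then show "\<exists>i j. i \<in> fst H \<and> j \<in> fst H \<and> i \<noteq> j \<and> e = {i, j}"
        using ij e0 unfolding H_def by auto
    qed
    show "fst H \<subseteq> fst G1" using hi unfolding H_def verts_def by auto
    show "snd H \<subseteq> snd G1"
    proof
      fix e assume "e \<in> snd H"
      then obtain e0 where e0: "e0 \<in> edges G1" "e = h ` e0" unfolding H_def by auto
      then obtain i j where ij: "e0 = {i,j}"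
        using g1 unfolding is_graph_def by blast
      show "e \<in> snd G1" using hedge e0 ij unfolding edges_def by auto
    qed
  qed
  have hom: "op_hom G1 H h"
    unfolding op_hom_def
  proof (intro conjI)
    show "h ` verts G1 \<subseteq> verts H" unfolding H_def verts_def by auto
    show "\<forall>i\<in>verts G1. \<forall>j\<in>verts G1. i \<le> j \<longrightarrow> h i \<le> h j"
      using f g fi unfolding op_hom_def h_def by (auto simp: subset_iff)
    show "\<forall>i j. {i, j} \<in> edges G1 \<longrightarrow> {h i, h j} \<in> edges H"
      unfolding H_def edges_def by (auto intro!: image_eqI[where x="{_,_}"])
  qed
  have "\<not> card (verts H) < card (verts G1)" using c1 sub hom unfolding ordered_core_def by blast
  then have ge: "card (verts G1) \<le> card (h ` verts G1)" unfolding H_def verts_def by simp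
  have "card (h ` verts G1) \<le> card (f ` verts G1)"
    unfolding h_def image_comp[symmetric] using fin1 by (simp add: card_image_le)
  moreover have "card (f ` verts G1) \<le> card (verts G1)" using fin1 card_image_le by blast
  ultimately have eq: "card (f ` verts G1) = card (verts G1)" using ge by linarith
  show inj: "inj_on f (verts G1)" using eq fin1 eq_card_imp_inj_on by blast
  show "card (verts G1) \<le> card (verts G2)"
    using eq fi fin2 card_mono by metis
  have e2: "(\<lambda>e. f ` e) ` edges G1 \<subseteq> edges G2"
  proof
    fix e assume "e \<in> (\<lambda>e. f ` e) ` edges G1"
    then obtain e0 where e0: "e0 \<in> edges G1" "e = f ` e0" by auto
    then obtain i j where ij: "e0 = {i,j}"
      using g1 unfolding is_graph_def by blast
    show "e \<in> edges G2" using f e0 ij unfolding op_hom_def by auto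
  qed
  have "inj_on (\<lambda>e. f ` e) (edges G1)"
    using inj_on_image_Pow[OF inj] edges_fin(2)[OF g1] inj_on_subset by blast
  then have "card ((\<lambda>e. f ` e) ` edges G1) = card (edges G1)" by (rule card_image)
  then show "card (edges G1) \<le> card (edges G2)"
    using e2 edges_fin(1)[OF g2] card_mono by metis
qed

theorem proposition4p3:
  fixes G1 G2 :: ograph
  assumes "ordered_core G1" and "ordered_core G2"
    and "\<exists>f. op_hom G1 G2 f" and "\<exists>g. op_hom G2 G1 g"
  shows "\<exists>h. op_iso G1 G2 h"
proof -
  obtain f g where f: "op_hom G1 G2 f" and g: "op_hom G2 G1 g" using assms by blast
  note a = one_dir[OF assms(1,2) f g] and b = one_dir[OF assms(2,1) g f]
  have g1: "is_graph G1" and g2: "is_graph G2" using assms unfolding ordered_core_def by auto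
  have fin2: "finite (verts G2)" using g2 unfolding is_graph_def by auto
  have fi: "f ` verts G1 \<subseteq> verts G2" using f unfolding op_hom_def by auto
  have "card (f ` verts G1) = card (verts G2)"
    using a b card_image by (metis le_antisym)
  then have "f ` verts G1 = verts G2" using fi fin2 card_subset_eq by blast
  then have bij: "bij_betw f (verts G1) (verts G2)" using a(1) unfolding bij_betw_def by blast
  have e2: "(\<lambda>e. f ` e) ` edges G1 \<subseteq> edges G2"
  proof
    fix e assume "e \<in> (\<lambda>e. f ` e) ` edges G1"
    then obtain e0 where e0: "e0 \<in> edges G1" "e = f ` e0" by auto
    then obtain i j where ij: "e0 = {i,j}"
      using g1 unfolding is_graph_def by blast
    show "e \<in> edges G2" using f e0 ij unfolding op_hom_def by auto
  qed
  have inje: "inj_on (\<lambda>e. f ` e) (edges G1)"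
    using inj_on_image_Pow[OF a(1)] edges_fin(2)[OF g1] inj_on_subset by blast
  then have "card ((\<lambda>e. f ` e) ` edges G1) = card (edges G2)"
    using a b card_image by (metis le_antisym)
  then have eeq: "(\<lambda>e. f ` e) ` edges G1 = edges G2"
    using e2 edges_fin(1)[OF g2] card_subset_eq by blast
  have refl: "\<forall>i\<in>verts G1. \<forall>j\<in>verts G1. {f i, f j} \<in> edges G2 \<longrightarrow> {i, j} \<in> edges G1"
  proof (intro ballI impI)
    fix i j assume ij: "i \<in> verts G1" "j \<in> verts G1" "{f i, f j} \<in> edges G2"
    then obtain e0 where e0: "e0 \<in> edges G1" "f ` {i,j} = f ` e0" using eeq by auto
    have "e0 \<subseteq> verts G1" using e0 edges_fin(2)[OF g1] by auto
    then have "{i,j} = e0" using inj_on_image_Pow[OF a(1)] e0 ij unfolding inj_on_def by auto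
    then show "{i, j} \<in> edges G1" using e0 by simp
  qed
  show ?thesis using f bij refl unfolding op_iso_def by blast
qed

end
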